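(* $M^L(6)\le 15$.
   Context: $\mathbb{F}=\{0,1\}$. The binary $n$-dimensional hypercube $\mathbb{F}^n$ is the graph on $\mathbb{F}^n$ where two words are adjacent iff their Hamming distance is $1$. For a nonempty $C\subseteq\mathbb{F}^n$, $I(\mathbf{x})=N[\mathbf{x}]\cap C$ with $N[\mathbf{x}]$ the words at Hamming distance $\le1$ from $\mathbf{x}$. $C$ is a local identifying code if $I(\mathbf{x})\ne\emptyset$ for all $\mathbf{x}$ and $I(\mathbf{x})\ne I(\mathbf{y})$ for all adjacent $\mathbf{x},\mathbf{y}$. $M^L(n)$ is the minimum cardinality of a local identifying code in $\mathbb{F}^n$. *)

theory Defs
  imports Main
begin

definition cube :: "nat \<Rightarrow> bool list set" where
  "cube n = {x. length x = n}"

definition hamming :: "bool list \<Rightarrow> bool list \<Rightarrow> nat" where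
  "hamming x y = card {i. i < length x \<and> x ! i \<noteq> y ! i}"

definition closed_nbhd :: "nat \<Rightarrow> bool list \<Rightarrow> bool list set" where
  "closed_nbhd n x = {y \<in> cube n. hamming x y \<le> 1}"

definition I_set :: "nat \<Rightarrow> bool list set \<Rightarrow> bool list \<Rightarrow> bool list set" where
  "I_set n C x = closed_nbhd n x \<inter> C"

definition local_identifying_code :: "nat \<Rightarrow> bool list set \<Rightarrow> bool" where
  "local_identifying_code n C \<longleftrightarrow>
     C \<subseteq> cube n \<and> C \<noteq> {} \<and>
     (\<forall>x \<in> cube n. I_set n C x \<noteq> {}) \<and>
     (\<forall>x \<in> cube n. \<forall>y \<in> cube n. hamming x y = 1 \<longrightarrow> I_set n C x \<noteq> I_set n C y)"

definition M_L :: "nat \<Rightarrow> nat" where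
  "M_L n = (LEAST k. \<exists>C. local_identifying_code n C \<and> card C = k)"

end

theory Submission
  imports Defs
begin

definition ham :: "bool list \<Rightarrow> bool list \<Rightarrow> nat" where
  "ham x y = length (filter (\<lambda>(a,b). a \<noteq> b) (zip x y))"

lemma hamming_ham: "length x = length y \<Longrightarrow> hamming x y = ham x y"
  unfolding hamming_def ham_def
  by (simp add: length_filter_conv_card case_prod_beta cong: conj_cong)

definition Wd :: "bool list list" where "Wd = List.n_lists 6 [False, True]"

lemma set_Wd: "set Wd = cube 6"
  unfolding Wd_def cube_def by (auto simp: set_n_lists)

definition Cl :: "bool list list" where
  "Cl = [[True, False, True, False, False, False],
  [False, True, True, False, False, False],
  [True, True, True, False, False, False],
  [True, False, True, True, False, False],
  [False, False, False, False, True, False],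
  [True, True, True, False, True, False],
  [False, False, False, True, True, False],
  [True, True, True, True, True, False],
  [True, False, False, True, False, True],
  [False, True, False, True, False, True],
  [True, True, False, True, False, True],
  [False, False, False, False, True, True],
  [True, True, False, False, True, True],
  [False, False, True, False, True, True],
  [False, False, True, True, True, True]]"

definition check :: bool where
  "check = (list_all (\<lambda>x. length x = 6) Cl \<and>
     list_all (\<lambda>x. list_ex (\<lambda>c. ham x c \<le> 1) Cl) Wd \<and>
     list_all (\<lambda>x. list_all (\<lambda>y. ham x y = 1 \<longrightarrow> list_ex (\<lambda>c. (ham x c \<le> 1) \<noteq> (ham y c \<le> 1)) Cl) Wd) Wd)"

lemma check_true: check
  unfolding check_def Wd_def Cl_def by code_simp

lemma I_set_eq: "x \<in> cube 6 \<Longrightarrow> I_set 6 (set Cl) x = {c \<in> set Cl. ham x c \<le> 1}"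
  using check_true unfolding I_set_def closed_nbhd_def check_def
  by (auto simp: cube_def hamming_ham list_all_iff)

lemma lic: "local_identifying_code 6 (set Cl)"
proof -
  have cs: "set Cl \<subseteq> cube 6" using check_true unfolding check_def
    by (auto simp: cube_def list_all_iff)
  have ne: "I_set 6 (set Cl) x \<noteq> {}" if "x \<in> cube 6" for x
    using check_true that unfolding check_def
    by (auto simp: I_set_eq list_all_iff list_ex_iff set_Wd)
  have df: "I_set 6 (set Cl) x \<noteq> I_set 6 (set Cl) y"
    if hx: "x \<in> cube 6" and hy: "y \<in> cube 6" and "hamming x y = 1" for x y
  proof -
    have "ham x y = 1" using that by (simp add: cube_def hamming_ham)
    moreover have "\<forall>x\<in>cube 6. \<forall>y\<in>cube 6. ham x y = 1 \<longrightarrow> (\<exists>c\<in>set Cl. (ham x c \<le> 1) \<noteq> (ham y c \<le> 1))"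
      using check_true unfolding check_def by (simp add: list_all_iff list_ex_iff set_Wd)
    ultimately obtain c where "c \<in> set Cl" "(ham x c \<le> 1) \<noteq> (ham y c \<le> 1)"
      using hx hy by blast
    then show ?thesis using that by (auto simp: I_set_eq)
  qed
  show ?thesis unfolding local_identifying_code_def using cs ne df by (auto simp: Cl_def)
qed

theorem mainTheorem9:
  shows "M_L 6 \<le> 15"
proof -
  have "card (set Cl) = 15" unfolding Cl_def by simp
  then show ?thesis unfolding M_L_def using lic by (metis (mono_tags, lifting) Least_le)
qed

end
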